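(* Let $P$ be a tree of height $\omega$ with bottom element $\bot$ in which every node has two incompatible extensions. Let $B$ be a Kripke set (in a Kripke structure over $P$ containing $\hat P$) and $\sigma\in P$. Then $\sigma\Vdash$ "$B$ is a branch through $\hat P$" if and only if $\sigma\Vdash 1_\bot\in B$ and for every $\tau\ge\sigma$ the set $\mathrm{ext}_\tau(B)$ is a branch through the tree $P_{\ge\tau}$.
   Context: Kripke semantics for set theory is standard. For $\sigma\in P$, $1_\sigma$ is the Kripke set with $(1_\sigma)_\tau=\emptyset$ if $\tau\le\sigma$ and $(1_\sigma)_\tau=\{\emptyset\}$ if $\sigma<\tau$ or $\sigma\perp\tau$. $\hat P$ is the Kripke set with $\hat P_\sigma=\{1_\rho:\rho\in P\}$ at every node, identity transitions. Internally, $B$ is a branch through $\hat P$ if $B\subseteq\hat P$ and (1) $\alpha\supseteq\beta\in B\to\alpha\in B$ for $\alpha\in\hat P$; (2) $\forall\alpha,\beta\in B\,(\alpha\subseteq\beta\vee\beta\subseteq\alpha)$; (3) $\forall\gamma\in\hat P\,((\forall\beta\in B\,(\gamma\subseteq\beta\vee\beta\subseteq\gamma))\to\gamma\in B)$. For $\sigma\Vdash U\subseteq\hat P$ and $\tau\ge\sigma$, $\mathrm{ext}_\tau(U)=\{\rho\ge\tau:\tau\Vdash 1_\rho\in U\}$. $P_{\ge\tau}=\{\rho\in P:\rho\ge\tau\}$. A branch through a tree (classically) is a nonempty, linearly ordered, downward closed subset with no maximal element. *)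

theory Defs
  imports Main
begin

text \<open>The poset P is the whole type 'p (of class order_bot; its least element
  bot is the bottom node of the tree).\<close>

definition incompat :: "'p::order \<Rightarrow> 'p \<Rightarrow> bool" where
  "incompat p q \<longleftrightarrow> \<not> (\<exists>r. p \<le> r \<and> q \<le> r)"

definition omega_tree :: "'p::order set \<Rightarrow> bool" where
  "omega_tree P \<longleftrightarrow>
     (\<forall>p\<in>P. finite {q\<in>P. q \<le> p} \<and> (\<forall>q\<in>P. \<forall>r\<in>P. q \<le> p \<longrightarrow> r \<le> p \<longrightarrow> q \<le> r \<or> r \<le> q))
     \<and> (\<forall>n::nat. \<exists>p\<in>P. card {q\<in>P. q < p} = n)"

definition splitting :: "'p::order set \<Rightarrow> bool" where
  "splitting P \<longleftrightarrow> (\<forall>p\<in>P. \<exists>q\<in>P. \<exists>r\<in>P. p \<le> q \<and> p \<le> r \<and> incompat q r)"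

definition tree_branch :: "'p::order set \<Rightarrow> 'p set \<Rightarrow> bool" where
  "tree_branch T X \<longleftrightarrow> X \<noteq> {} \<and> X \<subseteq> T
     \<and> (\<forall>x\<in>X. \<forall>y\<in>X. x \<le> y \<or> y \<le> x)
     \<and> (\<forall>x\<in>X. \<forall>y\<in>T. y \<le> x \<longrightarrow> y \<in> X)
     \<and> (\<forall>x\<in>X. \<exists>y\<in>X. x < y)"

text \<open>A Kripke structure over P: domains D \<sigma>, transition maps tr \<sigma> \<tau> (for \<sigma> \<le> \<tau>),
  membership relations mem \<sigma>; equality is interpreted as identity in each domain.
  As is standard for Kripke models of set theory, extensionality is forced.\<close>
definition kripke_structure ::
  "('p::order \<Rightarrow> 'a set) \<Rightarrow> ('p \<Rightarrow> 'p \<Rightarrow> 'a \<Rightarrow> 'a) \<Rightarrow> ('p \<Rightarrow> 'a \<Rightarrow> 'a \<Rightarrow> bool) \<Rightarrow> bool" where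
  "kripke_structure D tr mem \<longleftrightarrow>
     (\<forall>\<sigma> \<tau> x. \<sigma> \<le> \<tau> \<longrightarrow> x \<in> D \<sigma> \<longrightarrow> tr \<sigma> \<tau> x \<in> D \<tau>)
   \<and> (\<forall>\<sigma> x. x \<in> D \<sigma> \<longrightarrow> tr \<sigma> \<sigma> x = x)
   \<and> (\<forall>\<sigma> \<tau> \<rho> x. \<sigma> \<le> \<tau> \<longrightarrow> \<tau> \<le> \<rho> \<longrightarrow> x \<in> D \<sigma> \<longrightarrow> tr \<tau> \<rho> (tr \<sigma> \<tau> x) = tr \<sigma> \<rho> x)
   \<and> (\<forall>\<sigma> x y. mem \<sigma> x y \<longrightarrow> x \<in> D \<sigma> \<and> y \<in> D \<sigma>)
   \<and> (\<forall>\<sigma> \<tau> x y. \<sigma> \<le> \<tau> \<longrightarrow> mem \<sigma> x y \<longrightarrow> mem \<tau> (tr \<sigma> \<tau> x) (tr \<sigma> \<tau> y))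
   \<and> (\<forall>\<sigma> x y. x \<in> D \<sigma> \<longrightarrow> y \<in> D \<sigma> \<longrightarrow>
        (\<forall>\<tau>\<ge>\<sigma>. \<forall>z\<in>D \<tau>. mem \<tau> z (tr \<sigma> \<tau> x) \<longleftrightarrow> mem \<tau> z (tr \<sigma> \<tau> y)) \<longrightarrow> x = y)"

datatype fm =
    FMem nat nat
  | FEq nat nat
  | FFalse
  | FAnd fm fm
  | FOr fm fm
  | FImp fm fm
  | FAll nat fm
  | FEx nat fm

primrec forces ::
  "('p::order \<Rightarrow> 'a set) \<Rightarrow> ('p \<Rightarrow> 'p \<Rightarrow> 'a \<Rightarrow> 'a) \<Rightarrow> ('p \<Rightarrow> 'a \<Rightarrow> 'a \<Rightarrow> bool)
   \<Rightarrow> 'p \<Rightarrow> (nat \<Rightarrow> 'a) \<Rightarrow> fm \<Rightarrow> bool" where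
  "forces D tr mem \<sigma> v (FMem i j) = mem \<sigma> (v i) (v j)"
| "forces D tr mem \<sigma> v (FEq i j) = (v i = v j)"
| "forces D tr mem \<sigma> v FFalse = False"
| "forces D tr mem \<sigma> v (FAnd \<phi> \<psi>) = (forces D tr mem \<sigma> v \<phi> \<and> forces D tr mem \<sigma> v \<psi>)"
| "forces D tr mem \<sigma> v (FOr \<phi> \<psi>) = (forces D tr mem \<sigma> v \<phi> \<or> forces D tr mem \<sigma> v \<psi>)"
| "forces D tr mem \<sigma> v (FImp \<phi> \<psi>) =
     (\<forall>\<tau>\<ge>\<sigma>. forces D tr mem \<tau> (tr \<sigma> \<tau> \<circ> v) \<phi> \<longrightarrow> forces D tr mem \<tau> (tr \<sigma> \<tau> \<circ> v) \<psi>)"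
| "forces D tr mem \<sigma> v (FAll i \<phi>) =
     (\<forall>\<tau>\<ge>\<sigma>. \<forall>x\<in>D \<tau>. forces D tr mem \<tau> ((tr \<sigma> \<tau> \<circ> v)(i := x)) \<phi>)"
| "forces D tr mem \<sigma> v (FEx i \<phi>) = (\<exists>x\<in>D \<sigma>. forces D tr mem \<sigma> (v(i := x)) \<phi>)"

text \<open>emp is the empty Kripke set, one \<rho> is 1_\<rho>, hatP is P-hat (global elements,
  living at the bottom node and transported along tr).\<close>
definition contains_hatP ::
  "('p::order_bot \<Rightarrow> 'a set) \<Rightarrow> ('p \<Rightarrow> 'p \<Rightarrow> 'a \<Rightarrow> 'a) \<Rightarrow> ('p \<Rightarrow> 'a \<Rightarrow> 'a \<Rightarrow> bool)
   \<Rightarrow> 'a \<Rightarrow> ('p \<Rightarrow> 'a) \<Rightarrow> 'a \<Rightarrow> bool" where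
  "contains_hatP D tr mem emp one hatP \<longleftrightarrow>
     emp \<in> D bot \<and> hatP \<in> D bot \<and> (\<forall>\<rho>. one \<rho> \<in> D bot)
   \<and> (\<forall>\<tau>. \<forall>z\<in>D \<tau>. \<not> mem \<tau> z (tr bot \<tau> emp))
   \<and> (\<forall>\<rho> \<tau>. \<forall>z\<in>D \<tau>. mem \<tau> z (tr bot \<tau> (one \<rho>)) \<longleftrightarrow>
         ((\<rho> < \<tau> \<or> incompat \<rho> \<tau>) \<and> z = tr bot \<tau> emp))
   \<and> (\<forall>\<tau>. \<forall>z\<in>D \<tau>. mem \<tau> z (tr bot \<tau> hatP) \<longleftrightarrow> (\<exists>\<rho>. z = tr bot \<tau> (one \<rho>)))"

text \<open>Variable 0 stands for B, variable 1 for P-hat; variables 2,3,4 are bound.\<close>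
definition sub_fm :: "nat \<Rightarrow> nat \<Rightarrow> fm" where
  "sub_fm x y = FAll 4 (FImp (FMem 4 x) (FMem 4 y))"

definition B_sub_hatP_fm :: fm where
  "B_sub_hatP_fm = FAll 2 (FImp (FMem 2 0) (FMem 2 1))"

definition branch_fm :: fm where
  "branch_fm =
     FAnd B_sub_hatP_fm
    (FAnd (FAll 2 (FImp (FMem 2 1) (FAll 3 (FImp (FMem 3 0) (FImp (sub_fm 3 2) (FMem 2 0))))))
    (FAnd (FAll 2 (FImp (FMem 2 0) (FAll 3 (FImp (FMem 3 0) (FOr (sub_fm 2 3) (sub_fm 3 2))))))
          (FAll 2 (FImp (FMem 2 1)
             (FImp (FAll 3 (FImp (FMem 3 0) (FOr (sub_fm 2 3) (sub_fm 3 2)))) (FMem 2 0))))))"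

definition ext_at ::
  "('p::order_bot \<Rightarrow> 'p \<Rightarrow> 'a \<Rightarrow> 'a) \<Rightarrow> ('p \<Rightarrow> 'a \<Rightarrow> 'a \<Rightarrow> bool) \<Rightarrow> ('p \<Rightarrow> 'a)
   \<Rightarrow> 'p \<Rightarrow> 'a \<Rightarrow> 'p \<Rightarrow> 'p set" where
  "ext_at tr mem one \<sigma> U \<tau> = {\<rho>. \<tau> \<le> \<rho> \<and> mem \<tau> (tr bot \<tau> (one \<rho>)) (tr \<sigma> \<tau> U)}"

end

theory Submission
  imports Defs
begin

lemma all_ge_cong: "(\<And>\<tau>'. \<tau> \<le> \<tau>' \<Longrightarrow> P \<tau>' = Q \<tau>') \<Longrightarrow> (\<forall>\<tau>'\<ge>\<tau>. P \<tau>') = (\<forall>\<tau>'\<ge>\<tau>. Q \<tau>')"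
  by auto

lemma imm_below:
  fixes p e :: "'p::order"
  assumes fin: "finite {q. q \<le> e}" and pe: "p < e"
  shows "\<exists>c. p < c \<and> c \<le> e \<and> (\<forall>z. p < z \<longrightarrow> z \<le> c \<longrightarrow> z = c)"
proof -
  let ?A = "{z. p < z \<and> z \<le> e}"
  have fA: "finite ?A" by (rule finite_subset[OF _ fin]) auto
  have nA: "?A \<noteq> {}" using pe by auto
  obtain m where m: "m \<in> ?A" "\<forall>b\<in>?A. b \<le> m \<longrightarrow> b = m"
    using finite_has_minimal[OF fA nA] by blast
  have pm: "p < m" and me: "m \<le> e" using m(1) by simp_all
  have "z = m" if z: "p < z" "z \<le> m" for z
  proof -
    have "z \<le> e" using z(2) me by (rule order_trans)
    then have "z \<in> ?A" using z(1) by simp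
    then show ?thesis using m(2) z(2) by blast
  qed
  then show ?thesis using pm me by blast
qed

lemma comb:
  fixes M :: "'p::order_bot \<Rightarrow> 'p \<Rightarrow> bool" and \<sigma> :: 'p
  assumes lin: "\<And>p q r. q \<le> p \<Longrightarrow> r \<le> p \<Longrightarrow> q \<le> r \<or> r \<le> (q::'p)"
    and fin: "\<And>p::'p. finite {q. q \<le> p}"
    and ex: "\<And>p::'p. \<exists>e. p < e"
    and mono: "\<And>\<tau> \<tau>' a. \<sigma> \<le> \<tau> \<Longrightarrow> \<tau> \<le> \<tau>' \<Longrightarrow> M \<tau> a \<Longrightarrow> M \<tau>' a"
    and oeq: "\<And>\<tau> a c. \<sigma> \<le> \<tau> \<Longrightarrow> \<not> \<tau> \<le> a \<Longrightarrow> \<not> \<tau> \<le> c \<Longrightarrow> M \<tau> a = M \<tau> c"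
  shows "((\<forall>\<tau>'\<ge>\<sigma>. \<forall>a. \<forall>\<tau>1\<ge>\<tau>'. \<forall>c. M \<tau>1 c \<longrightarrow> (\<forall>\<tau>2\<ge>\<tau>1. (\<tau>2 \<le> a \<longrightarrow> a \<le> c) \<longrightarrow> M \<tau>2 a))
        \<and> (\<forall>\<tau>'\<ge>\<sigma>. \<forall>a. M \<tau>' a \<longrightarrow> (\<forall>\<tau>1\<ge>\<tau>'. \<forall>c. M \<tau>1 c \<longrightarrow> ((\<tau>1 \<le> c \<longrightarrow> c \<le> a) \<or> (\<tau>1 \<le> a \<longrightarrow> a \<le> c))))
        \<and> (\<forall>\<tau>'\<ge>\<sigma>. \<forall>a. \<forall>\<tau>1\<ge>\<tau>'. (\<forall>\<tau>2\<ge>\<tau>1. \<forall>c. M \<tau>2 c \<longrightarrow> ((\<tau>2 \<le> c \<longrightarrow> c \<le> a) \<or> (\<tau>2 \<le> a \<longrightarrow> a \<le> c))) \<longrightarrow> M \<tau>1 a))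
     \<longleftrightarrow> (M \<sigma> bot \<and> (\<forall>\<tau>\<ge>\<sigma>. tree_branch {\<rho>. \<tau> \<le> \<rho>} {\<rho>. \<tau> \<le> \<rho> \<and> M \<tau> \<rho>}))"
    (is "?R1 \<and> ?R2 \<and> ?R3 \<longleftrightarrow> ?RHS")
proof -
  define Comp where "Comp \<tau> a \<longleftrightarrow> (\<forall>\<tau>2\<ge>\<tau>. \<forall>c. M \<tau>2 c \<longrightarrow> ((\<tau>2 \<le> c \<longrightarrow> c \<le> a) \<or> (\<tau>2 \<le> a \<longrightarrow> a \<le> (c::'p))))" for \<tau> a
  let ?S1 = "\<forall>\<tau>\<ge>\<sigma>. \<forall>a c. M \<tau> c \<longrightarrow> (\<tau> \<le> a \<longrightarrow> a \<le> c) \<longrightarrow> M \<tau> a"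
  let ?S2 = "\<forall>\<tau>\<ge>\<sigma>. \<forall>a c. M \<tau> a \<longrightarrow> M \<tau> c \<longrightarrow> ((\<tau> \<le> c \<longrightarrow> c \<le> a) \<or> (\<tau> \<le> a \<longrightarrow> a \<le> c))"
  let ?S3 = "\<forall>\<tau>\<ge>\<sigma>. \<forall>a. Comp \<tau> a \<longrightarrow> M \<tau> a"
  have e1: "?R1 \<longleftrightarrow> ?S1"
  proof
    assume ?R1 then show ?S1 by (meson order_refl)
  next
    assume S1: ?S1
    show ?R1
    proof (intro allI impI)
      fix \<tau>' a \<tau>1 c \<tau>2 assume h: "\<sigma> \<le> \<tau>'" "\<tau>' \<le> \<tau>1" "M \<tau>1 c" "\<tau>1 \<le> \<tau>2" "\<tau>2 \<le> a \<longrightarrow> a \<le> c"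
      have s1: "\<sigma> \<le> \<tau>1" using h order_trans by blast
      then have "M \<tau>2 c" using mono h by blast
      moreover have "\<sigma> \<le> \<tau>2" using s1 h order_trans by blast
      ultimately show "M \<tau>2 a" using S1 h by blast
    qed
  qed
  have e2: "?R2 \<longleftrightarrow> ?S2"
  proof
    assume ?R2 then show ?S2 by (meson order_refl)
  next
    assume S2: ?S2
    show ?R2
    proof (intro allI impI)
      fix \<tau>' a \<tau>1 c assume h: "\<sigma> \<le> \<tau>'" "M \<tau>' a" "\<tau>' \<le> \<tau>1" "M \<tau>1 c"
      have "M \<tau>1 a" using mono h by blast
      moreover have "\<sigma> \<le> \<tau>1" using h order_trans by blast
      ultimately show "(\<tau>1 \<le> c \<longrightarrow> c \<le> a) \<or> (\<tau>1 \<le> a \<longrightarrow> a \<le> c)" using S2 h by blast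
    qed
  qed
  have e3: "?R3 \<longleftrightarrow> ?S3" unfolding Comp_def by (meson order_refl order_trans)
  have fwd: "?RHS" if S1: ?S1 and S2: ?S2 and S3: ?S3
  proof
    have "Comp \<sigma> bot" unfolding Comp_def by simp
    then show "M \<sigma> bot" using S3 by blast
    show "\<forall>\<tau>\<ge>\<sigma>. tree_branch {\<rho>. \<tau> \<le> \<rho>} {\<rho>. \<tau> \<le> \<rho> \<and> M \<tau> \<rho>}"
    proof (intro allI impI)
      fix \<tau> assume st: "\<sigma> \<le> \<tau>"
      have "Comp \<tau> \<tau>" unfolding Comp_def by (metis order.antisym)
      then have Mt: "M \<tau> \<tau>" using S3 st by blast
      have claimA: "M \<tau> c'" if x: "\<tau> \<le> x" "M \<tau> x" and c': "x < c'" "\<forall>z. x < z \<longrightarrow> z \<le> c' \<longrightarrow> z = c'"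
        and t'': "\<tau> \<le> \<tau>''" "\<tau>'' \<le> x" "M \<tau>'' c'" for x c' \<tau>''
      proof -
        have "Comp \<tau> c'" unfolding Comp_def
        proof (intro allI impI)
          fix \<tau>3 e assume h: "\<tau> \<le> \<tau>3" "M \<tau>3 e"
          show "(\<tau>3 \<le> e \<longrightarrow> e \<le> c') \<or> (\<tau>3 \<le> c' \<longrightarrow> c' \<le> e)"
          proof (rule ccontr)
            assume "\<not> ?thesis"
            then have n: "\<tau>3 \<le> e" "\<not> e \<le> c'" "\<tau>3 \<le> c'" "\<not> c' \<le> e" by auto
            have "\<tau>3 \<le> x \<or> x \<le> \<tau>3" using lin[OF n(3)] c' order.strict_implies_order by blast
            then have t3x: "\<tau>3 \<le> x" using c' n by (metis order.order_iff_strict)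
            have s3: "\<sigma> \<le> \<tau>3" using st h order_trans by blast
            have "M \<tau>3 x" using mono[OF st h(1) x(2)] .
            then have "(\<tau>3 \<le> e \<longrightarrow> e \<le> x) \<or> (\<tau>3 \<le> x \<longrightarrow> x \<le> e)" using S2 s3 h by blast
            then have xe: "x \<le> e" using n t3x c' by (meson order.strict_implies_order order_trans)
            have s'': "\<sigma> \<le> \<tau>''" using st t'' order_trans by blast
            from lin[OF t''(2) t3x] show False
            proof
              assume "\<tau>'' \<le> \<tau>3"
              then have "M \<tau>3 c'" using mono[OF s'' _ t''(3)] by blast
              then have "(\<tau>3 \<le> e \<longrightarrow> e \<le> c') \<or> (\<tau>3 \<le> c' \<longrightarrow> c' \<le> e)" using S2 s3 h by blast
              then show False using n by blast
            next
              assume "\<tau>3 \<le> \<tau>''"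
              then have "M \<tau>'' e" using mono[OF s3 _ h(2)] by blast
              then have "(\<tau>'' \<le> e \<longrightarrow> e \<le> c') \<or> (\<tau>'' \<le> c' \<longrightarrow> c' \<le> e)" using S2 s'' t'' by blast
              moreover have "\<tau>'' \<le> e" "\<tau>'' \<le> c'" using t'' xe c' order_trans order.strict_implies_order by blast+
              ultimately show False using n by blast
            qed
          qed
        qed
        then show ?thesis using S3 st by blast
      qed
      show "tree_branch {\<rho>. \<tau> \<le> \<rho>} {\<rho>. \<tau> \<le> \<rho> \<and> M \<tau> \<rho>}"
        unfolding tree_branch_def
      proof (intro conjI ballI)
        show "{\<rho>. \<tau> \<le> \<rho> \<and> M \<tau> \<rho>} \<noteq> {}" using Mt by auto
        show "{\<rho>. \<tau> \<le> \<rho> \<and> M \<tau> \<rho>} \<subseteq> {\<rho>. \<tau> \<le> \<rho>}" by auto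
        fix x assume x: "x \<in> {\<rho>. \<tau> \<le> \<rho> \<and> M \<tau> \<rho>}"
        {
          fix y assume "y \<in> {\<rho>. \<tau> \<le> \<rho> \<and> M \<tau> \<rho>}"
          then show "x \<le> y \<or> y \<le> x" using S2 st x by blast
        }
        {
          fix y assume "y \<in> {\<rho>. \<tau> \<le> \<rho>}"
          then show "y \<le> x \<longrightarrow> y \<in> {\<rho>. \<tau> \<le> \<rho> \<and> M \<tau> \<rho>}" using S1 st x by blast
        }
        show "\<exists>y\<in>{\<rho>. \<tau> \<le> \<rho> \<and> M \<tau> \<rho>}. x < y"
        proof -
          have tx: "\<tau> \<le> x" "M \<tau> x" using x by auto
          obtain e0 where "x < e0" using ex by blast
          then obtain c where c: "x < c" "\<forall>z. x < z \<longrightarrow> z \<le> c \<longrightarrow> z = c"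
            using imm_below[OF fin] by blast
          show ?thesis
          proof (cases "Comp \<tau> c")
            case True
            then have "M \<tau> c" using S3 st by blast
            moreover have "\<tau> \<le> c" using c tx order.strict_implies_order order_trans by blast
            ultimately show ?thesis using c by blast
          next
            case False
            then obtain \<tau>3 e where h: "\<tau> \<le> \<tau>3" "M \<tau>3 e"
              and n: "\<tau>3 \<le> e" "\<not> e \<le> c" "\<tau>3 \<le> c" "\<not> c \<le> e"
              unfolding Comp_def by blast
            have "\<tau>3 \<le> x \<or> x \<le> \<tau>3" using lin[OF n(3)] c order.strict_implies_order by blast
            then have t3x: "\<tau>3 \<le> x" using c n by (metis order.order_iff_strict)
            have s3: "\<sigma> \<le> \<tau>3" using st h order_trans by blast
            have "M \<tau>3 x" using mono[OF st h(1) tx(2)] .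
            then have "(\<tau>3 \<le> e \<longrightarrow> e \<le> x) \<or> (\<tau>3 \<le> x \<longrightarrow> x \<le> e)" using S2 s3 h by blast
            then have xe: "x \<le> e" using n t3x c by (meson order.strict_implies_order order_trans)
            have "x \<noteq> e" using n c by (metis order.strict_implies_order)
            then have "x < e" using xe by simp
            then obtain c' where c': "x < c'" "c' \<le> e" "\<forall>z. x < z \<longrightarrow> z \<le> c' \<longrightarrow> z = c'"
              using imm_below[OF fin] by blast
            have "\<tau>3 \<le> c'" using t3x c' order_trans order.strict_implies_order by blast
            then have "M \<tau>3 c'" using S1 s3 h c' by blast
            then have "M \<tau> c'" using claimA[OF tx c'(1) c'(3) h(1) t3x] by blast
            moreover have "\<tau> \<le> c'" using c' tx order.strict_implies_order order_trans by blast
            ultimately show ?thesis using c' by blast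
          qed
        qed
      qed
    qed
  qed
  have bwd: "?S1 \<and> ?S2 \<and> ?S3" if R: ?RHS
  proof -
    from R have Mb: "M \<sigma> bot" and TB: "\<And>\<tau>. \<sigma> \<le> \<tau> \<Longrightarrow> tree_branch {\<rho>. \<tau> \<le> \<rho>} {\<rho>. \<tau> \<le> \<rho> \<and> M \<tau> \<rho>}"
      by auto
    have Tb: "M \<tau> a" if "\<sigma> \<le> \<tau>" "\<not> \<tau> \<le> a" for \<tau> a
    proof -
      have "\<not> \<tau> \<le> bot" using that bot_least order_trans by blast
      moreover have "M \<tau> bot" using mono[OF order_refl that(1) Mb] .
      ultimately show ?thesis using oeq that by blast
    qed
    have S1: ?S1
    proof (intro allI impI)
      fix \<tau> a c assume h: "\<sigma> \<le> \<tau>" "M \<tau> c" "\<tau> \<le> a \<longrightarrow> a \<le> c"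
      show "M \<tau> a"
      proof (cases "\<tau> \<le> a")
        case True
        then have "a \<le> c" "\<tau> \<le> c" using h order_trans by blast+
        then show ?thesis using TB[OF h(1)] h True unfolding tree_branch_def by blast
      qed (use Tb h in blast)
    qed
    have S2: ?S2
    proof (intro allI impI)
      fix \<tau> a c assume h: "\<sigma> \<le> \<tau>" "M \<tau> a" "M \<tau> c"
      show "(\<tau> \<le> c \<longrightarrow> c \<le> a) \<or> (\<tau> \<le> a \<longrightarrow> a \<le> c)"
        using TB[OF h(1)] h unfolding tree_branch_def by blast
    qed
    have S3: ?S3
    proof (intro allI impI)
      fix \<tau> a assume h: "\<sigma> \<le> \<tau>" "Comp \<tau> a"
      show "M \<tau> a"
      proof (cases "\<tau> \<le> a")
        case False then show ?thesis using Tb h by blast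
      next
        case True
        show ?thesis
        proof (rule ccontr)
          assume nM: "\<not> M \<tau> a"
          let ?E = "{\<rho>. \<tau> \<le> \<rho> \<and> M \<tau> \<rho>}"
          have tb: "tree_branch {\<rho>. \<tau> \<le> \<rho>} ?E" using TB h by blast
          have tE: "\<tau> \<in> ?E" using tb unfolding tree_branch_def by auto
          let ?A = "{z. z \<in> ?E \<and> z \<le> a}"
          have "finite ?A" by (rule finite_subset[OF _ fin[of a]]) auto
          moreover have "?A \<noteq> {}" using tE True by blast
          ultimately obtain m where m: "m \<in> ?A" "\<forall>b\<in>?A. m \<le> b \<longrightarrow> m = b"
            using finite_has_maximal by blast
          obtain d where d: "d \<in> ?E" "m < d" using tb m(1) unfolding tree_branch_def by blast
          have "(\<tau> \<le> d \<longrightarrow> d \<le> a) \<or> (\<tau> \<le> a \<longrightarrow> a \<le> d)" using h(2) d unfolding Comp_def by blast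
          then have "d \<le> a \<or> a \<le> d" using d True by blast
          then show False
          proof
            assume "d \<le> a" then show False using m d by (metis (no_types, lifting) mem_Collect_eq order.strict_iff_order)
          next
            assume "a \<le> d" then have "a \<in> ?E" using tb d True unfolding tree_branch_def by blast
            then show False using nM by blast
          qed
        qed
      qed
    qed
    show ?thesis by (rule conjI[OF S1 conjI[OF S2 S3]])
  qed
  show ?thesis
  proof
    assume h: "?R1 \<and> ?R2 \<and> ?R3"
    from h have r1: ?R1 by (rule conjunct1)
    from h have r2: ?R2 by (rule conjunct1[OF conjunct2])
    from h have r3: ?R3 by (rule conjunct2[OF conjunct2])
    show ?RHS by (rule fwd[OF e1[THEN iffD1, OF r1] e2[THEN iffD1, OF r2] e3[THEN iffD1, OF r3]])
  next
    assume h: ?RHS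
    from bwd[OF h] have s: "?S1 \<and> ?S2 \<and> ?S3" .
    from s have s1: ?S1 by (rule conjunct1)
    from s have s2: ?S2 by (rule conjunct1[OF conjunct2])
    from s have s3: ?S3 by (rule conjunct2[OF conjunct2])
    show "?R1 \<and> ?R2 \<and> ?R3"
      by (rule conjI[OF e1[THEN iffD2, OF s1] conjI[OF e2[THEN iffD2, OF s2] e3[THEN iffD2, OF s3]]])
  qed
qed


lemma comp_upd: "(f \<circ> g(x:=y)) = (f \<circ> g)(x := f y)"
  by (auto simp: fun_eq_iff)

locale K =
  fixes D :: "'p::order_bot \<Rightarrow> 'a set" and tr :: "'p \<Rightarrow> 'p \<Rightarrow> 'a \<Rightarrow> 'a"
    and mem :: "'p \<Rightarrow> 'a \<Rightarrow> 'a \<Rightarrow> bool" and emp :: 'a and one :: "'p \<Rightarrow> 'a" and hatP :: 'a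
  assumes ks: "kripke_structure D tr mem" and ch: "contains_hatP D tr mem emp one hatP"
    and tree: "omega_tree (UNIV::'p set)" and spl: "splitting (UNIV::'p set)"
begin

abbreviation F where "F \<equiv> forces D tr mem"

lemma ks1: "\<forall>\<sigma> \<tau> x. \<sigma> \<le> \<tau> \<longrightarrow> x \<in> D \<sigma> \<longrightarrow> tr \<sigma> \<tau> x \<in> D \<tau>"
  using ks unfolding kripke_structure_def by (elim conjE) assumption
lemma ks2: "\<forall>\<sigma> x. x \<in> D \<sigma> \<longrightarrow> tr \<sigma> \<sigma> x = x"
  using ks unfolding kripke_structure_def by (elim conjE) assumption
lemma ks3: "\<forall>\<sigma> \<tau> \<rho> x. \<sigma> \<le> \<tau> \<longrightarrow> \<tau> \<le> \<rho> \<longrightarrow> x \<in> D \<sigma> \<longrightarrow> tr \<tau> \<rho> (tr \<sigma> \<tau> x) = tr \<sigma> \<rho> x"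
  using ks unfolding kripke_structure_def by (elim conjE) assumption
lemma ks4: "\<forall>\<sigma> x y. mem \<sigma> x y \<longrightarrow> x \<in> D \<sigma> \<and> y \<in> D \<sigma>"
  using ks unfolding kripke_structure_def by (elim conjE) assumption
lemma ks5: "\<forall>\<sigma> \<tau> x y. \<sigma> \<le> \<tau> \<longrightarrow> mem \<sigma> x y \<longrightarrow> mem \<tau> (tr \<sigma> \<tau> x) (tr \<sigma> \<tau> y)"
  using ks unfolding kripke_structure_def by (elim conjE) assumption
lemma ks6: "\<forall>\<sigma> x y. x \<in> D \<sigma> \<longrightarrow> y \<in> D \<sigma> \<longrightarrow>
        (\<forall>\<tau>\<ge>\<sigma>. \<forall>z\<in>D \<tau>. mem \<tau> z (tr \<sigma> \<tau> x) \<longleftrightarrow> mem \<tau> z (tr \<sigma> \<tau> y)) \<longrightarrow> x = y"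
  using ks unfolding kripke_structure_def by (elim conjE) assumption

lemma ch1: "emp \<in> D bot"
  using ch unfolding contains_hatP_def by (elim conjE) assumption
lemma ch2: "hatP \<in> D bot"
  using ch unfolding contains_hatP_def by (elim conjE) assumption
lemma ch3: "\<forall>\<rho>. one \<rho> \<in> D bot"
  using ch unfolding contains_hatP_def by (elim conjE) assumption
lemma ch5: "\<forall>\<rho> \<tau>. \<forall>z\<in>D \<tau>. mem \<tau> z (tr bot \<tau> (one \<rho>)) \<longleftrightarrow>
         ((\<rho> < \<tau> \<or> incompat \<rho> \<tau>) \<and> z = tr bot \<tau> emp)"
  using ch unfolding contains_hatP_def by (elim conjE) assumption
lemma ch6: "\<forall>\<tau>. \<forall>z\<in>D \<tau>. mem \<tau> z (tr bot \<tau> hatP) \<longleftrightarrow> (\<exists>\<rho>. z = tr bot \<tau> (one \<rho>))"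
  using ch unfolding contains_hatP_def by (elim conjE) assumption

lemma trD[simp]: "\<sigma> \<le> \<tau> \<Longrightarrow> x \<in> D \<sigma> \<Longrightarrow> tr \<sigma> \<tau> x \<in> D \<tau>"
  using ks1 by blast
lemma tr_id[simp]: "x \<in> D \<sigma> \<Longrightarrow> tr \<sigma> \<sigma> x = x"
  using ks2 by blast
lemma tr_comp[simp]: "\<sigma> \<le> \<tau> \<Longrightarrow> \<tau> \<le> \<rho> \<Longrightarrow> x \<in> D \<sigma> \<Longrightarrow> tr \<tau> \<rho> (tr \<sigma> \<tau> x) = tr \<sigma> \<rho> x"
  using ks3 by blast
lemma memD: "mem \<sigma> x y \<Longrightarrow> x \<in> D \<sigma> \<and> y \<in> D \<sigma>"
  using ks4 by blast
lemma mem_mono: "\<sigma> \<le> \<tau> \<Longrightarrow> mem \<sigma> x y \<Longrightarrow> mem \<tau> (tr \<sigma> \<tau> x) (tr \<sigma> \<tau> y)"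
  using ks5 by blast
lemma extens: "x \<in> D \<sigma> \<Longrightarrow> y \<in> D \<sigma> \<Longrightarrow>
   (\<And>\<tau> z. \<sigma> \<le> \<tau> \<Longrightarrow> z \<in> D \<tau> \<Longrightarrow> mem \<tau> z (tr \<sigma> \<tau> x) \<longleftrightarrow> mem \<tau> z (tr \<sigma> \<tau> y)) \<Longrightarrow> x = y"
  using ks6 by blast

lemma emp_D[simp]: "emp \<in> D bot" and hatP_D[simp]: "hatP \<in> D bot" and one_D[simp]: "one \<rho> \<in> D bot"
  using ch1 ch2 ch3 by auto

lemma trD_bot[simp]: "x \<in> D bot \<Longrightarrow> tr bot \<tau> x \<in> D \<tau>" by simp
lemma tr_comp_bot[simp]: "\<tau> \<le> \<rho> \<Longrightarrow> x \<in> D bot \<Longrightarrow> tr \<tau> \<rho> (tr bot \<tau> x) = tr bot \<rho> x" by simp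

lemma tree_lin: "q \<le> p \<Longrightarrow> r \<le> p \<Longrightarrow> q \<le> r \<or> r \<le> (q::'p)"
  using tree unfolding omega_tree_def by blast
lemma tree_A: "\<forall>p\<in>(UNIV::'p set). finite {q\<in>UNIV. q \<le> p} \<and> (\<forall>q\<in>UNIV. \<forall>r\<in>UNIV. q \<le> p \<longrightarrow> r \<le> p \<longrightarrow> q \<le> r \<or> r \<le> q)"
  using tree unfolding omega_tree_def by (rule conjunct1)
lemma tree_fin: "finite {q. q \<le> (p::'p)}"
  using conjunct1[OF bspec[OF tree_A UNIV_I, of p]] by simp

lemma notle: "\<not> \<tau> \<le> \<rho> \<longleftrightarrow> (\<rho> < \<tau> \<or> incompat \<rho> (\<tau>::'p))"
proof
  assume n: "\<not> \<tau> \<le> \<rho>"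
  show "\<rho> < \<tau> \<or> incompat \<rho> \<tau>"
  proof (cases "\<rho> \<le> \<tau>")
    case True
    have "\<rho> \<noteq> \<tau>" using n by auto
    then have "\<rho> < \<tau>" using True by (simp add: less_le)
    then show ?thesis ..
  next
    case False
    have "incompat \<rho> \<tau>" unfolding incompat_def
    proof
      assume "\<exists>r. \<rho> \<le> r \<and> \<tau> \<le> r"
      then obtain r where "\<rho> \<le> r" "\<tau> \<le> r" by blast
      from tree_lin[OF this] show False using n False by blast
    qed
    then show ?thesis ..
  qed
next
  assume "\<rho> < \<tau> \<or> incompat \<rho> \<tau>"
  then show "\<not> \<tau> \<le> \<rho>"
  proof
    assume l: "\<rho> < \<tau>"
    show ?thesis
    proof
      assume "\<tau> \<le> \<rho>"
      from leD[OF this] l show False by contradiction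
    qed
  next
    assume i: "incompat \<rho> \<tau>"
    show ?thesis
    proof
      assume "\<tau> \<le> \<rho>"
      then have "\<rho> \<le> \<rho> \<and> \<tau> \<le> \<rho>" by simp
      then show False using i unfolding incompat_def by blast
    qed
  qed
qed

lemma memO: "mem \<tau> z (tr bot \<tau> (one \<rho>)) \<longleftrightarrow> (\<not> \<tau> \<le> \<rho> \<and> z = tr bot \<tau> emp)"
proof (cases "z \<in> D \<tau>")
  case True
  then show ?thesis using ch5 by (simp add: notle)
next
  case False
  have "tr bot \<tau> emp \<in> D \<tau>" by simp
  then show ?thesis using memD[of \<tau> z] False by blast
qed

lemma memH: "mem \<tau> z (tr bot \<tau> hatP) \<longleftrightarrow> (\<exists>\<rho>. z = tr bot \<tau> (one \<rho>))"
proof (cases "z \<in> D \<tau>")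
  case True
  then show ?thesis using ch6 by simp
next
  case False
  have "\<And>\<rho>. tr bot \<tau> (one \<rho>) \<in> D \<tau>" by simp
  then show ?thesis using memD[of \<tau> z] False by blast
qed

lemma Oeq:
  assumes na0: "\<not> \<tau> \<le> a" and nc0: "\<not> \<tau> \<le> c"
  shows "tr bot \<tau> (one a) = tr bot \<tau> (one c)"
proof (rule extens)
  show "tr bot \<tau> (one a) \<in> D \<tau>" by simp
next
  show "tr bot \<tau> (one c) \<in> D \<tau>" by simp
next
  fix \<tau>' z assume t: "\<tau> \<le> \<tau>'" "z \<in> D \<tau>'"
  have na: "\<not> \<tau>' \<le> a" using t(1) na0 order_trans by blast
  have nc: "\<not> \<tau>' \<le> c" using t(1) nc0 order_trans by blast
  show "mem \<tau>' z (tr \<tau> \<tau>' (tr bot \<tau> (one a))) \<longleftrightarrow> mem \<tau>' z (tr \<tau> \<tau>' (tr bot \<tau> (one c)))"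
    using t na nc by (simp add: memO)
qed

lemma val_tr: "\<tau> \<le> \<tau>' \<Longrightarrow> \<tau>' \<le> \<tau>1 \<Longrightarrow> \<forall>k. v k \<in> D \<tau> \<Longrightarrow> tr \<tau>' \<tau>1 \<circ> (tr \<tau> \<tau>' \<circ> v) = tr \<tau> \<tau>1 \<circ> v"
  by (auto simp: fun_eq_iff)
lemma val_id: "\<forall>k. v k \<in> D \<tau> \<Longrightarrow> tr \<tau> \<tau> \<circ> v = v"
  by (auto simp: fun_eq_iff)
lemma valD: "\<tau> \<le> \<tau>' \<Longrightarrow> \<forall>k. v k \<in> D \<tau> \<Longrightarrow> x \<in> D \<tau>' \<Longrightarrow> \<forall>k. ((tr \<tau> \<tau>' \<circ> v)(i:=x)) k \<in> D \<tau>'"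
  by auto

lemma fall_imp:
  assumes v: "\<forall>k. v k \<in> D \<tau>" and ia: "i \<noteq> a"
  shows "F \<tau> v (FAll i (FImp (FMem i a) \<psi>)) \<longleftrightarrow>
    (\<forall>\<tau>'\<ge>\<tau>. \<forall>x\<in>D \<tau>'. mem \<tau>' x (tr \<tau> \<tau>' (v a)) \<longrightarrow> F \<tau>' ((tr \<tau> \<tau>' \<circ> v)(i:=x)) \<psi>)"
proof -
  have eq: "tr \<tau>' \<tau>1 \<circ> ((tr \<tau> \<tau>' \<circ> v)(i:=x)) = (tr \<tau> \<tau>1 \<circ> v)(i := tr \<tau>' \<tau>1 x)"
    if "\<tau> \<le> \<tau>'" "\<tau>' \<le> \<tau>1" for \<tau>' \<tau>1 x
    using that v by (simp add: comp_upd val_tr)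
  have eq0: "tr \<tau>' \<tau>' \<circ> ((tr \<tau> \<tau>' \<circ> v)(i:=x)) = (tr \<tau> \<tau>' \<circ> v)(i := x)"
    if "\<tau> \<le> \<tau>'" "x \<in> D \<tau>'" for \<tau>' x
    using that v by (intro val_id) auto
  show ?thesis
  proof
    assume L: "F \<tau> v (FAll i (FImp (FMem i a) \<psi>))"
    show "\<forall>\<tau>'\<ge>\<tau>. \<forall>x\<in>D \<tau>'. mem \<tau>' x (tr \<tau> \<tau>' (v a)) \<longrightarrow> F \<tau>' ((tr \<tau> \<tau>' \<circ> v)(i:=x)) \<psi>"
    proof (intro allI impI ballI)
      fix \<tau>' x assume a: "\<tau> \<le> \<tau>'" "x \<in> D \<tau>'" "mem \<tau>' x (tr \<tau> \<tau>' (v a))"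
      let ?w = "(tr \<tau> \<tau>' \<circ> v)(i:=x)"
      from L have L': "\<forall>\<tau>'\<ge>\<tau>. \<forall>x\<in>D \<tau>'. F \<tau>' ((tr \<tau> \<tau>' \<circ> v)(i:=x)) (FImp (FMem i a) \<psi>)"
        by (simp only: forces.simps(7))
      have "F \<tau>' ?w (FImp (FMem i a) \<psi>)" using L' a(1,2) by blast
      then have "\<forall>\<tau>1\<ge>\<tau>'. F \<tau>1 (tr \<tau>' \<tau>1 \<circ> ?w) (FMem i a) \<longrightarrow> F \<tau>1 (tr \<tau>' \<tau>1 \<circ> ?w) \<psi>"
        by (simp only: forces.simps(6))
      then have "F \<tau>' (tr \<tau>' \<tau>' \<circ> ?w) (FMem i a) \<longrightarrow> F \<tau>' (tr \<tau>' \<tau>' \<circ> ?w) \<psi>"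
        using order_refl by blast
      then have "F \<tau>' ?w (FMem i a) \<longrightarrow> F \<tau>' ?w \<psi>" using eq0[OF a(1,2)] by simp
      moreover have "F \<tau>' ?w (FMem i a)" using a(3) ia by simp
      ultimately show "F \<tau>' ?w \<psi>" by blast
    qed
  next
    assume R: "\<forall>\<tau>'\<ge>\<tau>. \<forall>x\<in>D \<tau>'. mem \<tau>' x (tr \<tau> \<tau>' (v a)) \<longrightarrow> F \<tau>' ((tr \<tau> \<tau>' \<circ> v)(i:=x)) \<psi>"
    show "F \<tau> v (FAll i (FImp (FMem i a) \<psi>))"
    proof (simp only: forces.simps(6,7), intro allI impI ballI)
      fix \<tau>' x \<tau>1 assume a: "\<tau> \<le> \<tau>'" "x \<in> D \<tau>'" "\<tau>' \<le> \<tau>1"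
        "F \<tau>1 (tr \<tau>' \<tau>1 \<circ> (tr \<tau> \<tau>' \<circ> v)(i := x)) (FMem i a)"
      have t: "\<tau> \<le> \<tau>1" using a(1,3) by (rule order_trans)
      have xD: "tr \<tau>' \<tau>1 x \<in> D \<tau>1" using a(2,3) by simp
      from a(4) have m: "mem \<tau>1 (tr \<tau>' \<tau>1 x) (tr \<tau> \<tau>1 (v a))" using a ia v by simp
      have "F \<tau>1 ((tr \<tau> \<tau>1 \<circ> v)(i := tr \<tau>' \<tau>1 x)) \<psi>" using R t xD m by blast
      then show "F \<tau>1 (tr \<tau>' \<tau>1 \<circ> (tr \<tau> \<tau>' \<circ> v)(i := x)) \<psi>" using eq[OF a(1,3)] by simp
    qed
  qed
qed

lemma sub_lem:
  assumes w: "\<forall>k. w k \<in> D \<tau>" and wi: "w i = tr bot \<tau> (one a)" and wj: "w j = tr bot \<tau> (one b)"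
    and i: "i \<noteq> 4" and j: "j \<noteq> 4"
  shows "F \<tau> w (sub_fm i j) \<longleftrightarrow> (\<tau> \<le> b \<longrightarrow> b \<le> a)"
proof -
  have i4: "(4::nat) \<noteq> i" using i by simp
  have "F \<tau> w (sub_fm i j) \<longleftrightarrow> (\<forall>\<tau>'\<ge>\<tau>. \<forall>x\<in>D \<tau>'. mem \<tau>' x (tr bot \<tau>' (one a)) \<longrightarrow> mem \<tau>' x (tr bot \<tau>' (one b)))"
    unfolding sub_fm_def
    apply (subst fall_imp[OF w i4])
    apply (rule all_ge_cong)
    using wi wj i j by simp
  also have "\<dots> \<longleftrightarrow> (\<forall>\<tau>'\<ge>\<tau>. \<not> \<tau>' \<le> a \<longrightarrow> \<not> \<tau>' \<le> b)"
  proof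
    assume A: "\<forall>\<tau>'\<ge>\<tau>. \<forall>x\<in>D \<tau>'. mem \<tau>' x (tr bot \<tau>' (one a)) \<longrightarrow> mem \<tau>' x (tr bot \<tau>' (one b))"
    show "\<forall>\<tau>'\<ge>\<tau>. \<not> \<tau>' \<le> a \<longrightarrow> \<not> \<tau>' \<le> b"
    proof (intro allI impI)
      fix \<tau>' assume t: "\<tau> \<le> \<tau>'" "\<not> \<tau>' \<le> a"
      have eD: "tr bot \<tau>' emp \<in> D \<tau>'" by simp
      have "mem \<tau>' (tr bot \<tau>' emp) (tr bot \<tau>' (one a))" using t(2) by (simp add: memO)
      then have "mem \<tau>' (tr bot \<tau>' emp) (tr bot \<tau>' (one b))"
        using A t(1) eD by blast
      then show "\<not> \<tau>' \<le> b" by (simp add: memO)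
    qed
  next
    assume B: "\<forall>\<tau>'\<ge>\<tau>. \<not> \<tau>' \<le> a \<longrightarrow> \<not> \<tau>' \<le> b"
    show "\<forall>\<tau>'\<ge>\<tau>. \<forall>x\<in>D \<tau>'. mem \<tau>' x (tr bot \<tau>' (one a)) \<longrightarrow> mem \<tau>' x (tr bot \<tau>' (one b))"
    proof (intro allI impI ballI)
      fix \<tau>' x assume t: "\<tau> \<le> \<tau>'" "x \<in> D \<tau>'" "mem \<tau>' x (tr bot \<tau>' (one a))"
      then have na: "\<not> \<tau>' \<le> a" and xe: "x = tr bot \<tau>' emp" by (simp_all add: memO)
      have "\<not> \<tau>' \<le> b" using B t(1) na by blast
      then show "mem \<tau>' x (tr bot \<tau>' (one b))" using xe by (simp add: memO)
    qed
  qed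
  also have "\<dots> \<longleftrightarrow> (\<tau> \<le> b \<longrightarrow> b \<le> a)"
  proof
    assume C: "\<forall>\<tau>'\<ge>\<tau>. \<not> \<tau>' \<le> a \<longrightarrow> \<not> \<tau>' \<le> b"
    show "\<tau> \<le> b \<longrightarrow> b \<le> a"
    proof
      assume "\<tau> \<le> b"
      then have "\<not> b \<le> a \<longrightarrow> \<not> b \<le> b" using C by blast
      then show "b \<le> a" by auto
    qed
  next
    assume C: "\<tau> \<le> b \<longrightarrow> b \<le> a"
    show "\<forall>\<tau>'\<ge>\<tau>. \<not> \<tau>' \<le> a \<longrightarrow> \<not> \<tau>' \<le> b"
    proof (intro allI impI notI)
      fix \<tau>' assume t: "\<tau> \<le> \<tau>'" "\<not> \<tau>' \<le> a" "\<tau>' \<le> b"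
      have "\<tau> \<le> b" using t(1,3) by (rule order_trans)
      then have "b \<le> a" using C by blast
      with t(3) have "\<tau>' \<le> a" by (rule order_trans)
      then show False using t(2) by contradiction
    qed
  qed
  finally show ?thesis .
qed

definition "SubH \<tau> bt \<equiv> \<forall>\<tau>'\<ge>\<tau>. \<forall>z. mem \<tau>' z (bt \<tau>') \<longrightarrow> (\<exists>\<rho>. z = tr bot \<tau>' (one \<rho>))"

lemma SubH_mono: "\<tau> \<le> \<tau>' \<Longrightarrow> SubH \<tau> bt \<Longrightarrow> SubH \<tau>' bt"
  unfolding SubH_def by (meson order_trans)

lemma fall_imp_bt:
  assumes v: "\<forall>k. v k \<in> D \<tau>" and ia: "i \<noteq> a" and hb: "\<And>\<tau>'. \<tau> \<le> \<tau>' \<Longrightarrow> tr \<tau> \<tau>' (v a) = bt \<tau>'"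
  shows "F \<tau> v (FAll i (FImp (FMem i a) \<psi>)) \<longleftrightarrow>
    (\<forall>\<tau>'\<ge>\<tau>. \<forall>x\<in>D \<tau>'. mem \<tau>' x (bt \<tau>') \<longrightarrow> F \<tau>' ((tr \<tau> \<tau>' \<circ> v)(i:=x)) \<psi>)"
  using fall_imp[OF v ia, of \<psi>] hb by auto

lemma bsub_sem:
  assumes v: "\<forall>k. v k \<in> D \<tau>" and v1: "v 1 = tr bot \<tau> hatP"
    and hb: "\<And>\<tau>'. \<tau> \<le> \<tau>' \<Longrightarrow> tr \<tau> \<tau>' (v 0) = bt \<tau>'"
  shows "F \<tau> v B_sub_hatP_fm \<longleftrightarrow> SubH \<tau> bt"
  unfolding B_sub_hatP_fm_def SubH_def using v v1 memD
  by (subst fall_imp_bt[OF v _ hb]) (auto simp: memH)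

lemma lift_O:
  assumes sh: "SubH \<tau> bt" and PQ: "\<And>\<tau>1 c. \<tau> \<le> \<tau>1 \<Longrightarrow> P \<tau>1 (tr bot \<tau>1 (one c)) \<longleftrightarrow> Q \<tau>1 c"
  shows "(\<forall>\<tau>1\<ge>\<tau>. \<forall>y\<in>D \<tau>1. mem \<tau>1 y (bt \<tau>1) \<longrightarrow> P \<tau>1 y) \<longleftrightarrow>
         (\<forall>\<tau>1\<ge>\<tau>. \<forall>c. mem \<tau>1 (tr bot \<tau>1 (one c)) (bt \<tau>1) \<longrightarrow> Q \<tau>1 c)"
proof
  assume L: "\<forall>\<tau>1\<ge>\<tau>. \<forall>y\<in>D \<tau>1. mem \<tau>1 y (bt \<tau>1) \<longrightarrow> P \<tau>1 y"
  show "\<forall>\<tau>1\<ge>\<tau>. \<forall>c. mem \<tau>1 (tr bot \<tau>1 (one c)) (bt \<tau>1) \<longrightarrow> Q \<tau>1 c"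
  proof (intro allI impI)
    fix \<tau>1 c assume a: "\<tau> \<le> \<tau>1" "mem \<tau>1 (tr bot \<tau>1 (one c)) (bt \<tau>1)"
    have "tr bot \<tau>1 (one c) \<in> D \<tau>1" by simp
    then have "P \<tau>1 (tr bot \<tau>1 (one c))" using L a by blast
    then show "Q \<tau>1 c" using PQ[OF a(1)] by simp
  qed
next
  assume R: "\<forall>\<tau>1\<ge>\<tau>. \<forall>c. mem \<tau>1 (tr bot \<tau>1 (one c)) (bt \<tau>1) \<longrightarrow> Q \<tau>1 c"
  show "\<forall>\<tau>1\<ge>\<tau>. \<forall>y\<in>D \<tau>1. mem \<tau>1 y (bt \<tau>1) \<longrightarrow> P \<tau>1 y"
  proof (intro allI impI ballI)
    fix \<tau>1 y assume a: "\<tau> \<le> \<tau>1" "y \<in> D \<tau>1" "mem \<tau>1 y (bt \<tau>1)"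
    then obtain c where c: "y = tr bot \<tau>1 (one c)" using sh unfolding SubH_def by blast
    from R a(1) have "mem \<tau>1 (tr bot \<tau>1 (one c)) (bt \<tau>1) \<longrightarrow> Q \<tau>1 c" by blast
    then have "Q \<tau>1 c" using a(3) c by simp
    then show "P \<tau>1 y" using PQ[OF a(1)] c by simp
  qed
qed

lemma lift_H:
  "(\<forall>\<tau>1\<ge>\<tau>. \<forall>x\<in>D \<tau>1. mem \<tau>1 x (tr bot \<tau>1 hatP) \<longrightarrow> P \<tau>1 x) \<longleftrightarrow> (\<forall>\<tau>1\<ge>\<tau>. \<forall>a. P \<tau>1 (tr bot \<tau>1 (one a)))"
proof
  assume L: "\<forall>\<tau>1\<ge>\<tau>. \<forall>x\<in>D \<tau>1. mem \<tau>1 x (tr bot \<tau>1 hatP) \<longrightarrow> P \<tau>1 x"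
  show "\<forall>\<tau>1\<ge>\<tau>. \<forall>a. P \<tau>1 (tr bot \<tau>1 (one a))"
  proof (intro allI impI)
    fix \<tau>1 a assume t: "\<tau> \<le> \<tau>1"
    have d: "tr bot \<tau>1 (one a) \<in> D \<tau>1" by simp
    have m: "mem \<tau>1 (tr bot \<tau>1 (one a)) (tr bot \<tau>1 hatP)" using memH by blast
    show "P \<tau>1 (tr bot \<tau>1 (one a))" using L t d m by blast
  qed
next
  assume R: "\<forall>\<tau>1\<ge>\<tau>. \<forall>a. P \<tau>1 (tr bot \<tau>1 (one a))"
  show "\<forall>\<tau>1\<ge>\<tau>. \<forall>x\<in>D \<tau>1. mem \<tau>1 x (tr bot \<tau>1 hatP) \<longrightarrow> P \<tau>1 x"
  proof (intro allI impI ballI)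
    fix \<tau>1 x assume t: "\<tau> \<le> \<tau>1" "x \<in> D \<tau>1" "mem \<tau>1 x (tr bot \<tau>1 hatP)"
    then obtain \<rho> where "x = tr bot \<tau>1 (one \<rho>)" using memH by blast
    then show "P \<tau>1 x" using R t(1) by blast
  qed
qed

definition "Acmp = FAll 3 (FImp (FMem 3 0) (FOr (sub_fm 2 3) (sub_fm 3 2)))"
definition "C1i = FAll 3 (FImp (FMem 3 0) (FImp (sub_fm 3 2) (FMem 2 0)))"

lemma Acmp_sem:
  assumes u: "\<forall>k. u k \<in> D \<tau>" and hb: "\<And>\<tau>'. \<tau> \<le> \<tau>' \<Longrightarrow> tr \<tau> \<tau>' (u 0) = bt \<tau>'"
    and u2: "u 2 = tr bot \<tau> (one a)" and sh: "SubH \<tau> bt"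
  shows "F \<tau> u Acmp \<longleftrightarrow>
    (\<forall>\<tau>1\<ge>\<tau>. \<forall>c. mem \<tau>1 (tr bot \<tau>1 (one c)) (bt \<tau>1) \<longrightarrow> ((\<tau>1 \<le> c \<longrightarrow> c \<le> a) \<or> (\<tau>1 \<le> a \<longrightarrow> a \<le> c)))"
proof -
  have G: "F \<tau>1 ((tr \<tau> \<tau>1 \<circ> u)(3 := tr bot \<tau>1 (one c))) (FOr (sub_fm 2 3) (sub_fm 3 2))
     \<longleftrightarrow> ((\<tau>1 \<le> c \<longrightarrow> c \<le> a) \<or> (\<tau>1 \<le> a \<longrightarrow> a \<le> c))" if "\<tau> \<le> \<tau>1" for \<tau>1 c
  proof -
    have D1: "\<forall>k. ((tr \<tau> \<tau>1 \<circ> u)(3 := tr bot \<tau>1 (one c))) k \<in> D \<tau>1" using u that by auto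
    show ?thesis
      apply (simp only: forces.simps)
      apply (subst sub_lem[OF D1, of 2 a 3 c]) using that u2 u apply auto[4]
      apply (subst sub_lem[OF D1, of 3 c 2 a]) using that u2 u by auto
  qed
  have n30: "(3::nat) \<noteq> 0" by simp
  show ?thesis unfolding Acmp_def
    apply (subst fall_imp_bt[OF u n30 hb])
    apply (assumption)?
    apply (rule lift_O[OF sh])
    by (rule G)
qed

lemma C1i_sem:
  assumes u: "\<forall>k. u k \<in> D \<tau>" and hb: "\<And>\<tau>'. \<tau> \<le> \<tau>' \<Longrightarrow> tr \<tau> \<tau>' (u 0) = bt \<tau>'"
    and u2: "u 2 = tr bot \<tau> (one a)" and sh: "SubH \<tau> bt"
  shows "F \<tau> u C1i \<longleftrightarrow>
    (\<forall>\<tau>1\<ge>\<tau>. \<forall>c. mem \<tau>1 (tr bot \<tau>1 (one c)) (bt \<tau>1) \<longrightarrow>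
       (\<forall>\<tau>2\<ge>\<tau>1. (\<tau>2 \<le> a \<longrightarrow> a \<le> c) \<longrightarrow> mem \<tau>2 (tr bot \<tau>2 (one a)) (bt \<tau>2)))"
proof -
  have G: "F \<tau>1 ((tr \<tau> \<tau>1 \<circ> u)(3 := tr bot \<tau>1 (one c))) (FImp (sub_fm 3 2) (FMem 2 0))
     \<longleftrightarrow> (\<forall>\<tau>2\<ge>\<tau>1. (\<tau>2 \<le> a \<longrightarrow> a \<le> c) \<longrightarrow> mem \<tau>2 (tr bot \<tau>2 (one a)) (bt \<tau>2))" if t: "\<tau> \<le> \<tau>1" for \<tau>1 c
  proof -
    let ?w = "(tr \<tau> \<tau>1 \<circ> u)(3 := tr bot \<tau>1 (one c))"
    have D2: "\<forall>k. (tr \<tau>1 \<tau>2 \<circ> ?w) k \<in> D \<tau>2" if "\<tau>1 \<le> \<tau>2" for \<tau>2 using u t that by auto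
    have S: "F \<tau>2 (tr \<tau>1 \<tau>2 \<circ> ?w) (sub_fm 3 2) \<longleftrightarrow> (\<tau>2 \<le> a \<longrightarrow> a \<le> c)" if "\<tau>1 \<le> \<tau>2" for \<tau>2
      by (rule sub_lem[OF D2[OF that]]) (use that t u u2 in auto)
    have M: "(tr \<tau>1 \<tau>2 \<circ> ?w) 2 = tr bot \<tau>2 (one a) \<and> (tr \<tau>1 \<tau>2 \<circ> ?w) 0 = bt \<tau>2" if "\<tau>1 \<le> \<tau>2" for \<tau>2
    proof -
      have "\<tau> \<le> \<tau>2" using t that by (rule order_trans)
      then show ?thesis using t that u u2 hb[of \<tau>2] by auto
    qed
    show ?thesis using S M by auto
  qed
  have n30: "(3::nat) \<noteq> 0" by simp
  show ?thesis unfolding C1i_def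
    apply (subst fall_imp_bt[OF u n30 hb])
    apply (assumption)?
    apply (rule lift_O[OF sh])
    by (rule G)
qed


lemma C1_sem:
  assumes v: "\<forall>k. v k \<in> D \<tau>" and v1: "v 1 = tr bot \<tau> hatP"
    and hb: "\<And>\<tau>'. \<tau> \<le> \<tau>' \<Longrightarrow> tr \<tau> \<tau>' (v 0) = bt \<tau>'" and sh: "SubH \<tau> bt"
  shows "F \<tau> v (FAll 2 (FImp (FMem 2 1) C1i)) \<longleftrightarrow>
    (\<forall>\<tau>'\<ge>\<tau>. \<forall>a. \<forall>\<tau>1\<ge>\<tau>'. \<forall>c. mem \<tau>1 (tr bot \<tau>1 (one c)) (bt \<tau>1) \<longrightarrow>
       (\<forall>\<tau>2\<ge>\<tau>1. (\<tau>2 \<le> a \<longrightarrow> a \<le> c) \<longrightarrow> mem \<tau>2 (tr bot \<tau>2 (one a)) (bt \<tau>2)))"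
proof -
  have n21: "(2::nat) \<noteq> 1" by simp
  have hH: "tr \<tau> \<tau>' (v 1) = tr bot \<tau>' hatP" if "\<tau> \<le> \<tau>'" for \<tau>' using v1 that by simp
  have G: "F \<tau>' ((tr \<tau> \<tau>' \<circ> v)(2 := tr bot \<tau>' (one a))) C1i \<longleftrightarrow>
    (\<forall>\<tau>1\<ge>\<tau>'. \<forall>c. mem \<tau>1 (tr bot \<tau>1 (one c)) (bt \<tau>1) \<longrightarrow>
       (\<forall>\<tau>2\<ge>\<tau>1. (\<tau>2 \<le> a \<longrightarrow> a \<le> c) \<longrightarrow> mem \<tau>2 (tr bot \<tau>2 (one a)) (bt \<tau>2)))"
    if t: "\<tau> \<le> \<tau>'" for \<tau>' a
  proof (rule C1i_sem)
    show "\<forall>k. ((tr \<tau> \<tau>' \<circ> v)(2 := tr bot \<tau>' (one a))) k \<in> D \<tau>'" using v t by auto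
    show "tr \<tau>' \<tau>'' (((tr \<tau> \<tau>' \<circ> v)(2 := tr bot \<tau>' (one a))) 0) = bt \<tau>''" if "\<tau>' \<le> \<tau>''" for \<tau>''
    proof -
      have tt: "\<tau> \<le> \<tau>''" using t that by (rule order_trans)
      have v0D: "v 0 \<in> D \<tau>" using v by blast
      show ?thesis using tr_comp[OF t that v0D] hb[OF tt] by simp
    qed
    show "((tr \<tau> \<tau>' \<circ> v)(2 := tr bot \<tau>' (one a))) 2 = tr bot \<tau>' (one a)" by simp
    show "SubH \<tau>' bt" using sh t SubH_mono by blast
  qed
  show ?thesis
    apply (subst fall_imp_bt[OF v n21 hH])
    apply (assumption)?
    apply (subst lift_H)
    apply (rule all_ge_cong)
    using G by simp
qed

lemma C2_sem:
  assumes v: "\<forall>k. v k \<in> D \<tau>"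
    and hb: "\<And>\<tau>'. \<tau> \<le> \<tau>' \<Longrightarrow> tr \<tau> \<tau>' (v 0) = bt \<tau>'" and sh: "SubH \<tau> bt"
  shows "F \<tau> v (FAll 2 (FImp (FMem 2 0) Acmp)) \<longleftrightarrow>
    (\<forall>\<tau>'\<ge>\<tau>. \<forall>a. mem \<tau>' (tr bot \<tau>' (one a)) (bt \<tau>') \<longrightarrow>
       (\<forall>\<tau>1\<ge>\<tau>'. \<forall>c. mem \<tau>1 (tr bot \<tau>1 (one c)) (bt \<tau>1) \<longrightarrow> ((\<tau>1 \<le> c \<longrightarrow> c \<le> a) \<or> (\<tau>1 \<le> a \<longrightarrow> a \<le> c))))"
proof -
  have n20: "(2::nat) \<noteq> 0" by simp
  have G: "F \<tau>' ((tr \<tau> \<tau>' \<circ> v)(2 := tr bot \<tau>' (one a))) Acmp \<longleftrightarrow>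
    (\<forall>\<tau>1\<ge>\<tau>'. \<forall>c. mem \<tau>1 (tr bot \<tau>1 (one c)) (bt \<tau>1) \<longrightarrow> ((\<tau>1 \<le> c \<longrightarrow> c \<le> a) \<or> (\<tau>1 \<le> a \<longrightarrow> a \<le> c)))"
    if t: "\<tau> \<le> \<tau>'" for \<tau>' a
  proof (rule Acmp_sem)
    show "\<forall>k. ((tr \<tau> \<tau>' \<circ> v)(2 := tr bot \<tau>' (one a))) k \<in> D \<tau>'" using v t by auto
    show "tr \<tau>' \<tau>'' (((tr \<tau> \<tau>' \<circ> v)(2 := tr bot \<tau>' (one a))) 0) = bt \<tau>''" if "\<tau>' \<le> \<tau>''" for \<tau>''
    proof -
      have tt: "\<tau> \<le> \<tau>''" using t that by (rule order_trans)
      have v0D: "v 0 \<in> D \<tau>" using v by blast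
      show ?thesis using tr_comp[OF t that v0D] hb[OF tt] by simp
    qed
    show "((tr \<tau> \<tau>' \<circ> v)(2 := tr bot \<tau>' (one a))) 2 = tr bot \<tau>' (one a)" by simp
    show "SubH \<tau>' bt" using sh t SubH_mono by blast
  qed
  show ?thesis
    apply (subst fall_imp_bt[OF v n20 hb])
    apply (assumption)?
    apply (rule lift_O[OF sh])
    by (rule G)
qed

lemma C3_sem:
  assumes v: "\<forall>k. v k \<in> D \<tau>" and v1: "v 1 = tr bot \<tau> hatP"
    and hb: "\<And>\<tau>'. \<tau> \<le> \<tau>' \<Longrightarrow> tr \<tau> \<tau>' (v 0) = bt \<tau>'" and sh: "SubH \<tau> bt"
  shows "F \<tau> v (FAll 2 (FImp (FMem 2 1) (FImp Acmp (FMem 2 0)))) \<longleftrightarrow>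
    (\<forall>\<tau>'\<ge>\<tau>. \<forall>a. \<forall>\<tau>1\<ge>\<tau>'. (\<forall>\<tau>2\<ge>\<tau>1. \<forall>c. mem \<tau>2 (tr bot \<tau>2 (one c)) (bt \<tau>2) \<longrightarrow>
        ((\<tau>2 \<le> c \<longrightarrow> c \<le> a) \<or> (\<tau>2 \<le> a \<longrightarrow> a \<le> c))) \<longrightarrow> mem \<tau>1 (tr bot \<tau>1 (one a)) (bt \<tau>1))"
proof -
  have n21: "(2::nat) \<noteq> 1" by simp
  have hH: "tr \<tau> \<tau>' (v 1) = tr bot \<tau>' hatP" if "\<tau> \<le> \<tau>'" for \<tau>' using v1 that by simp
  have G: "F \<tau>' ((tr \<tau> \<tau>' \<circ> v)(2 := tr bot \<tau>' (one a))) (FImp Acmp (FMem 2 0)) \<longleftrightarrow>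
    (\<forall>\<tau>1\<ge>\<tau>'. (\<forall>\<tau>2\<ge>\<tau>1. \<forall>c. mem \<tau>2 (tr bot \<tau>2 (one c)) (bt \<tau>2) \<longrightarrow>
        ((\<tau>2 \<le> c \<longrightarrow> c \<le> a) \<or> (\<tau>2 \<le> a \<longrightarrow> a \<le> c))) \<longrightarrow> mem \<tau>1 (tr bot \<tau>1 (one a)) (bt \<tau>1))"
    if t: "\<tau> \<le> \<tau>'" for \<tau>' a
  proof -
    let ?w = "(tr \<tau> \<tau>' \<circ> v)(2 := tr bot \<tau>' (one a))"
    have A: "F \<tau>1 (tr \<tau>' \<tau>1 \<circ> ?w) Acmp \<longleftrightarrow> (\<forall>\<tau>2\<ge>\<tau>1. \<forall>c. mem \<tau>2 (tr bot \<tau>2 (one c)) (bt \<tau>2) \<longrightarrow>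
        ((\<tau>2 \<le> c \<longrightarrow> c \<le> a) \<or> (\<tau>2 \<le> a \<longrightarrow> a \<le> c)))" if t1: "\<tau>' \<le> \<tau>1" for \<tau>1
    proof (rule Acmp_sem)
      have tt1: "\<tau> \<le> \<tau>1" using t t1 by (rule order_trans)
      show "\<forall>k. (tr \<tau>' \<tau>1 \<circ> ?w) k \<in> D \<tau>1" using v t t1 by auto
      show "tr \<tau>1 \<tau>2 ((tr \<tau>' \<tau>1 \<circ> ?w) 0) = bt \<tau>2" if "\<tau>1 \<le> \<tau>2" for \<tau>2
      proof -
        have tt2: "\<tau> \<le> \<tau>2" using tt1 that by (rule order_trans)
        have v0D: "v 0 \<in> D \<tau>" using v by blast
        show ?thesis using tr_comp[OF t t1 v0D] tr_comp[OF tt1 that v0D] hb[OF tt2] by simp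
      qed
      show "(tr \<tau>' \<tau>1 \<circ> ?w) 2 = tr bot \<tau>1 (one a)" using t1 by simp
      show "SubH \<tau>1 bt" using sh tt1 SubH_mono by blast
    qed
    have B: "F \<tau>1 (tr \<tau>' \<tau>1 \<circ> ?w) (FMem 2 0) \<longleftrightarrow> mem \<tau>1 (tr bot \<tau>1 (one a)) (bt \<tau>1)" if t1: "\<tau>' \<le> \<tau>1" for \<tau>1
    proof -
      have tt1: "\<tau> \<le> \<tau>1" using t t1 by (rule order_trans)
      have v0D: "v 0 \<in> D \<tau>" using v by blast
      show ?thesis using tr_comp[OF t t1 v0D] hb[OF tt1] t1 by simp
    qed
    show ?thesis
      apply (simp only: forces.simps(6))
      apply (rule all_ge_cong)
      using A B by simp
  qed
  show ?thesis
    apply (subst fall_imp_bt[OF v n21 hH])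
    apply (assumption)?
    apply (subst lift_H)
    apply (rule all_ge_cong)
    using G by simp
qed

lemma ex_above: "\<exists>e. (p::'p) < e"
proof -
  obtain q r where "p \<le> q" "p \<le> r" "incompat q r" using spl unfolding splitting_def by blast
  then have "p \<noteq> q" unfolding incompat_def by blast
  then show ?thesis using \<open>p \<le> q\<close> by (auto simp: order.order_iff_strict)
qed

end

theorem mainTheorem12:
  fixes D :: "'p::order_bot \<Rightarrow> 'a set"
    and tr :: "'p \<Rightarrow> 'p \<Rightarrow> 'a \<Rightarrow> 'a"
    and mem :: "'p \<Rightarrow> 'a \<Rightarrow> 'a \<Rightarrow> bool"
    and emp hatP B :: 'a and one :: "'p \<Rightarrow> 'a" and \<sigma> :: 'p
  assumes "omega_tree (UNIV :: 'p set)"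
    and "splitting (UNIV :: 'p set)"
    and "kripke_structure D tr mem"
    and "contains_hatP D tr mem emp one hatP"
    and "B \<in> D \<sigma>"
  shows "forces D tr mem \<sigma> ((\<lambda>_. B)(1 := tr bot \<sigma> hatP)) branch_fm \<longleftrightarrow>
         (forces D tr mem \<sigma> ((\<lambda>_. B)(1 := tr bot \<sigma> hatP)) B_sub_hatP_fm
          \<and> mem \<sigma> (tr bot \<sigma> (one bot)) B
          \<and> (\<forall>\<tau>\<ge>\<sigma>. tree_branch {\<rho>. \<tau> \<le> \<rho>} (ext_at tr mem one \<sigma> B \<tau>)))"
proof -
  interpret K D tr mem emp one hatP
    using assms(1-4) by unfold_locales
  let ?v0 = "(\<lambda>_::nat. B)(1 := tr bot \<sigma> hatP)"
  define bt where "bt = (\<lambda>\<tau>. tr \<sigma> \<tau> B)"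
  have BD: "B \<in> D \<sigma>" by (rule assms(5))
  have v: "\<forall>k. ?v0 k \<in> D \<sigma>" using BD by auto
  have v1: "?v0 1 = tr bot \<sigma> hatP" by simp
  have hb: "\<And>\<tau>'. \<sigma> \<le> \<tau>' \<Longrightarrow> tr \<sigma> \<tau>' (?v0 0) = bt \<tau>'" by (simp add: bt_def)
  have bf: "branch_fm = FAnd B_sub_hatP_fm (FAnd (FAll 2 (FImp (FMem 2 1) C1i))
       (FAnd (FAll 2 (FImp (FMem 2 0) Acmp)) (FAll 2 (FImp (FMem 2 1) (FImp Acmp (FMem 2 0))))))"
    by (simp add: branch_fm_def C1i_def Acmp_def)
  have sb: "F \<sigma> ?v0 B_sub_hatP_fm \<longleftrightarrow> SubH \<sigma> bt" by (rule bsub_sem[OF v v1 hb])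
  have mono: "mem \<tau>' (tr bot \<tau>' (one a)) (bt \<tau>')"
    if "\<sigma> \<le> \<tau>" "\<tau> \<le> \<tau>'" "mem \<tau> (tr bot \<tau> (one a)) (bt \<tau>)" for \<tau> \<tau>' a
    using mem_mono[OF that(2) that(3)] that BD by (simp add: bt_def)
  have oeq: "mem \<tau> (tr bot \<tau> (one a)) (bt \<tau>) = mem \<tau> (tr bot \<tau> (one c)) (bt \<tau>)"
    if "\<sigma> \<le> \<tau>" "\<not> \<tau> \<le> a" "\<not> \<tau> \<le> c" for \<tau> a c
    using Oeq[OF that(2,3)] by simp
  note cb = comb[where M="\<lambda>\<tau> a. mem \<tau> (tr bot \<tau> (one a)) (bt \<tau>)" and \<sigma>=\<sigma>, OF tree_lin tree_fin ex_above mono oeq]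
  have RHS_eq: "(mem \<sigma> (tr bot \<sigma> (one bot)) B \<and> (\<forall>\<tau>\<ge>\<sigma>. tree_branch {\<rho>. \<tau> \<le> \<rho>} (ext_at tr mem one \<sigma> B \<tau>)))
     \<longleftrightarrow> (mem \<sigma> (tr bot \<sigma> (one bot)) (bt \<sigma>) \<and> (\<forall>\<tau>\<ge>\<sigma>. tree_branch {\<rho>. \<tau> \<le> \<rho>} {\<rho>. \<tau> \<le> \<rho> \<and> mem \<tau> (tr bot \<tau> (one \<rho>)) (bt \<tau>)}))"
    using BD by (simp add: ext_at_def bt_def)
  show ?thesis
  proof (cases "SubH \<sigma> bt")
    case False
    then show ?thesis
      unfolding bf forces.simps(4) sb by (simp only: False simp_thms)
  next
    case True
    show ?thesis
      unfolding bf forces.simps(4) sb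
      apply (subst C1_sem[OF v v1 hb True])
      apply (assumption)?
      apply (subst C2_sem[OF v hb True])
      apply (assumption)?
      apply (subst C3_sem[OF v v1 hb True])
      apply (assumption)?
      apply (subst RHS_eq)
      apply (simp only: True simp_thms)
      by (rule cb)
  qed
qed

end
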